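(* Let $k<n<m<\phi(k)$. Then the value in $U_q^+(\mathfrak{so}_{2n})$ of the bracketed word $[y_k\,x_{n+1}\,x_{n+2}\cdots x_m]$, where $y_k=e[k,n]$, does not depend on the arrangement of the (skew) brackets on the sequence $y_k,x_{n+1},\dots,x_m$.
   Context: Let $\mathbf{k}$ be a field, $G$ an abelian group, $n\ge3$, $X=\{x_1,\dots,x_n\}$, $g_i\in G$, characters $\chi^i:G\to\mathbf{k}^*$, $p_{ij}=\chi^i(g_j)$; for homogeneous $u,v$, $p(u,v)=\chi^u(g_v)$ (replace $x_i$ by $g_i$, resp. $\chi^i$). $G\langle X\rangle$: skew group algebra with $x_ig=\chi^i(g)gx_i$; skew bracket $[u,v]=uv-p(u,v)vu$. Fix $q\in\mathbf{k}^*$, $q\ne-1$; assume $p_{ii}=q$ ($1\le i\le n$), $p_{i,i-1}p_{i-1,i}=q^{-1}$ ($1<i<n$), $p_{n-2,n}p_{n,n-2}=q^{-1}$, $p_{n-1,n}p_{n,n-1}=1$, $p_{ij}p_{ji}=1$ for all other $i<j$ with $j>i+1$. $U_q^+(\mathfrak{so}_{2n})$ is the quotient of $G\langle X\rangle$ by the ideal generated by $[x_i,[x_i,x_{i+1}]]$, $[[x_i,x_{i+1}],x_{i+1}]$ ($1\le i\le n-2$), $[x_{n-2},[x_{n-2},x_n]]$, $[[x_{n-2},x_n],x_n]$, $[x_i,x_j]$ ($1\le i<j\le n-1$, $j>i+1$), $[x_i,x_n]$ ($i\le n-3$), $[x_{n-1},x_n]$. For $n<i<2n$, $x_i:=x_{2n-i}$;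 $\phi(i)=2n-i$. For $k<n$, $e[k,n]$ is the left-normed bracketing $[[\dots[y_1,y_2],\dots],y_r]$ of the letters of the word $e(k,n)$, where $e(k,n)=x_kx_{k+1}\cdots x_{n-2}x_n$ (and $e(n-1,n)=x_n$, unbracketed). *)

theory Defs
  imports Main
begin

text \<open>The skew group algebra G<X>: elements are finitely supported functions
  from pairs (g, w) (g in G, w a word in the letters 1..n) to the field k;
  the basis element (g,w) stands for g x_{w1} ... x_{wr}.\<close>

type_synonym ('g, 'k) elt = "'g \<times> nat list \<Rightarrow> 'k"

definition supp :: "('g, 'k::zero) elt \<Rightarrow> ('g \<times> nat list) set" where
  "supp a = {z. a z \<noteq> 0}"

definition fsupp :: "('g, 'k::zero) elt \<Rightarrow> bool" where
  "fsupp a \<longleftrightarrow> finite (supp a)"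

definition gw :: "(nat \<Rightarrow> 'g::ab_group_add) \<Rightarrow> nat list \<Rightarrow> 'g" where
  "gw gs w = sum_list (map gs w)"

definition chiw :: "(nat \<Rightarrow> 'g \<Rightarrow> 'k::field) \<Rightarrow> nat list \<Rightarrow> 'g \<Rightarrow> 'k" where
  "chiw chi w h = prod_list (map (\<lambda>a. chi a h) w)"

definition pp :: "(nat \<Rightarrow> 'g \<Rightarrow> 'k::field) \<Rightarrow> (nat \<Rightarrow> 'g::ab_group_add) \<Rightarrow> nat list \<Rightarrow> nat list \<Rightarrow> 'k" where
  "pp chi gs u v = chiw chi u (gw gs v)"

definition addv :: "('g, 'k::field) elt \<Rightarrow> ('g, 'k) elt \<Rightarrow> ('g, 'k) elt" where
  "addv a b = (\<lambda>z. a z + b z)"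

definition subv :: "('g, 'k::field) elt \<Rightarrow> ('g, 'k) elt \<Rightarrow> ('g, 'k) elt" where
  "subv a b = (\<lambda>z. a z - b z)"

definition smul :: "'k::field \<Rightarrow> ('g, 'k) elt \<Rightarrow> ('g, 'k) elt" where
  "smul c a = (\<lambda>z. c * a z)"

text \<open>Multiplication in G<X>: (g u)(h v) = chi^u(h) (g h) u v, from x_i g = chi^i(g) g x_i.\<close>
definition mul :: "(nat \<Rightarrow> 'g \<Rightarrow> 'k::field) \<Rightarrow> ('g::ab_group_add, 'k) elt \<Rightarrow> ('g, 'k) elt \<Rightarrow> ('g, 'k) elt" where
  "mul chi a b = (\<lambda>z. \<Sum>pq\<in>supp a \<times> supp b.
     if fst (fst pq) + fst (snd pq) = fst z \<and> snd (fst pq) @ snd (snd pq) = snd z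
     then a (fst pq) * b (snd pq) * chiw chi (snd (fst pq)) (fst (snd pq)) else 0)"

definition X :: "nat \<Rightarrow> ('g::zero, 'k::field) elt" where
  "X i = (\<lambda>z. if z = (0, [i]) then 1 else 0)"

definition sbr :: "(nat \<Rightarrow> 'g \<Rightarrow> 'k::field) \<Rightarrow> 'k \<Rightarrow> ('g::ab_group_add, 'k) elt \<Rightarrow> ('g, 'k) elt \<Rightarrow> ('g, 'k) elt" where
  "sbr chi p a b = subv (mul chi a b) (smul p (mul chi b a))"

inductive_set ideal_gen :: "(nat \<Rightarrow> 'g \<Rightarrow> 'k::field) \<Rightarrow> ('g::ab_group_add, 'k) elt set \<Rightarrow> ('g, 'k) elt set"
  for chi S where
  gen: "a \<in> S \<Longrightarrow> a \<in> ideal_gen chi S"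
| zero: "(\<lambda>z. 0) \<in> ideal_gen chi S"
| add: "a \<in> ideal_gen chi S \<Longrightarrow> b \<in> ideal_gen chi S \<Longrightarrow> addv a b \<in> ideal_gen chi S"
| lmul: "a \<in> ideal_gen chi S \<Longrightarrow> fsupp c \<Longrightarrow> mul chi c a \<in> ideal_gen chi S"
| rmul: "a \<in> ideal_gen chi S \<Longrightarrow> fsupp c \<Longrightarrow> mul chi a c \<in> ideal_gen chi S"

text \<open>Bracketings: binary trees whose leaves are homogeneous atoms (element, degree word).\<close>
datatype 'a btree = Lf 'a | Nd "'a btree" "'a btree"

fun leaves :: "'a btree \<Rightarrow> 'a list" where
  "leaves (Lf a) = [a]"
| "leaves (Nd l r) = leaves l @ leaves r"

fun deg :: "('e \<times> nat list) btree \<Rightarrow> nat list" where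
  "deg (Lf a) = snd a"
| "deg (Nd l r) = deg l @ deg r"

fun ev :: "(nat \<Rightarrow> 'g \<Rightarrow> 'k::field) \<Rightarrow> (nat \<Rightarrow> 'g::ab_group_add)
           \<Rightarrow> (('g, 'k) elt \<times> nat list) btree \<Rightarrow> ('g, 'k) elt" where
  "ev chi gs (Lf a) = fst a"
| "ev chi gs (Nd l r) = sbr chi (pp chi gs (deg l) (deg r)) (ev chi gs l) (ev chi gs r)"

definition xa :: "nat \<Rightarrow> ('g::zero, 'k::field) elt \<times> nat list" where
  "xa i = (X i, [i])"

definition xl :: "nat \<Rightarrow> (('g::zero, 'k::field) elt \<times> nat list) btree" where
  "xl i = Lf (xa i)"

fun lnorm :: "'a list \<Rightarrow> 'a btree" where
  "lnorm [] = undefined"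
| "lnorm (a # as) = foldl (\<lambda>t b. Nd t (Lf b)) (Lf a) as"

definition rels :: "(nat \<Rightarrow> 'g \<Rightarrow> 'k::field) \<Rightarrow> (nat \<Rightarrow> 'g::ab_group_add) \<Rightarrow> nat \<Rightarrow> ('g, 'k) elt set" where
  "rels chi gs n =
     {ev chi gs (Nd (xl i) (Nd (xl i) (xl (i+1)))) | i. 1 \<le> i \<and> i \<le> n - 2}
   \<union> {ev chi gs (Nd (Nd (xl i) (xl (i+1))) (xl (i+1))) | i. 1 \<le> i \<and> i \<le> n - 2}
   \<union> {ev chi gs (Nd (xl (n-2)) (Nd (xl (n-2)) (xl n))),
      ev chi gs (Nd (Nd (xl (n-2)) (xl n)) (xl n))}
   \<union> {ev chi gs (Nd (xl i) (xl j)) | i j. 1 \<le> i \<and> i < j \<and> j \<le> n - 1 \<and> i + 1 < j}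
   \<union> {ev chi gs (Nd (xl i) (xl n)) | i. 1 \<le> i \<and> i \<le> n - 3}
   \<union> {ev chi gs (Nd (xl (n-1)) (xl n))}"

definition eqU :: "(nat \<Rightarrow> 'g \<Rightarrow> 'k::field) \<Rightarrow> (nat \<Rightarrow> 'g::ab_group_add) \<Rightarrow> nat \<Rightarrow> ('g, 'k) elt \<Rightarrow> ('g, 'k) elt \<Rightarrow> bool" where
  "eqU chi gs n a b \<longleftrightarrow> subv a b \<in> ideal_gen chi (rels chi gs n)"

definition ew :: "nat \<Rightarrow> nat \<Rightarrow> nat list" where
  "ew k n = [k..<n-1] @ [n]"

definition ebr :: "(nat \<Rightarrow> 'g \<Rightarrow> 'k::field) \<Rightarrow> (nat \<Rightarrow> 'g::ab_group_add) \<Rightarrow> nat \<Rightarrow> nat \<Rightarrow> ('g, 'k) elt" where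
  "ebr chi gs k n = ev chi gs (lnorm (map xa (ew k n)))"

definition so_params :: "(nat \<Rightarrow> 'g \<Rightarrow> 'k::field) \<Rightarrow> (nat \<Rightarrow> 'g::ab_group_add) \<Rightarrow> nat \<Rightarrow> 'k \<Rightarrow> bool" where
  "so_params chi gs n q \<longleftrightarrow>
     (\<forall>i\<in>{1..n}. \<forall>a b. chi i (a + b) = chi i a * chi i b) \<and>
     (\<forall>i\<in>{1..n}. \<forall>a. chi i a \<noteq> 0) \<and>
     (\<forall>i\<in>{1..n}. chi i (gs i) = q) \<and>
     (\<forall>i. 1 < i \<and> i < n \<longrightarrow> chi i (gs (i-1)) * chi (i-1) (gs i) = inverse q) \<and>
     chi (n-2) (gs n) * chi n (gs (n-2)) = inverse q \<and>
     chi (n-1) (gs n) * chi n (gs (n-1)) = 1 \<and>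
     (\<forall>i j. 1 \<le> i \<and> i < j \<and> j \<le> n \<and> i + 1 < j \<and> (i, j) \<noteq> (n-2, n) \<longrightarrow>
        chi i (gs j) * chi j (gs i) = 1)"

end

theory Submission
  imports Defs
begin


typedef 'k fa = "UNIV :: (nat list \<Rightarrow> 'k) set" by auto

definition splits :: "nat list \<Rightarrow> (nat list \<times> nat list) set" where
  "splits w = {(u,v). u @ v = w}"

lemma splits_eq: "splits w = (\<lambda>i. (take i w, drop i w)) ` {..length w}"
  unfolding splits_def
proof (safe)
  fix u v assume "w = u @ v"
  then show "(u, v) \<in> (\<lambda>i. (take i (u@v), drop i (u@v))) ` {..length (u@v)}"
    by (intro image_eqI[where x="length u"]) auto
qed auto

lemma finite_splits[simp]: "finite (splits w)"
  unfolding splits_eq by simp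

definition trip :: "nat list \<Rightarrow> (nat list \<times> nat list \<times> nat list) set" where
  "trip w = {(u,v,x). u @ v @ x = w}"

lemma finite_trip[simp]: "finite (trip w)"
proof -
  have "trip w \<subseteq> (\<Union>(u,y)\<in>splits w. (\<lambda>(v,x). (u,v,x)) ` splits y)"
    unfolding trip_def splits_def by force
  moreover have "finite (\<Union>(u,y)\<in>splits w. (\<lambda>(v,x). (u,v,x)) ` splits y)"
    by (auto intro!: finite_UN_I)
  ultimately show ?thesis by (rule finite_subset)
qed

lemma sum_splits_left:
  "(\<Sum>(x,v)\<in>splits w. \<Sum>(u,u')\<in>splits x. F u u' v) = (\<Sum>(u,u',v)\<in>trip w. F u u' v)"
proof -
  have "(\<Sum>(x,v)\<in>splits w. \<Sum>(u,u')\<in>splits x. F u u' v)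
      = (\<Sum>xv\<in>splits w. \<Sum>uu\<in>splits (fst xv). F (fst uu) (snd uu) (snd xv))"
    by (simp add: case_prod_beta)
  also have "\<dots> = (\<Sum>p\<in>Sigma (splits w) (\<lambda>xv. splits (fst xv)). F (fst (snd p)) (snd (snd p)) (snd (fst p)))"
    by (subst sum.Sigma) (auto simp: case_prod_beta)
  also have "\<dots> = (\<Sum>(u,u',v)\<in>trip w. F u u' v)"
    by (rule sum.reindex_bij_witness[where i="\<lambda>(u,u',v). ((u@u',v),(u,u'))"
          and j="\<lambda>p. (fst (snd p), snd (snd p), snd (fst p))"])
       (auto simp: trip_def splits_def)
  finally show ?thesis .
qed

lemma sum_splits_right:
  "(\<Sum>(u,y)\<in>splits w. \<Sum>(u',v)\<in>splits y. F u u' v) = (\<Sum>(u,u',v)\<in>trip w. F u u' v)"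
proof -
  have "(\<Sum>(u,y)\<in>splits w. \<Sum>(u',v)\<in>splits y. F u u' v)
      = (\<Sum>xv\<in>splits w. \<Sum>uu\<in>splits (snd xv). F (fst xv) (fst uu) (snd uu))"
    by (simp add: case_prod_beta)
  also have "\<dots> = (\<Sum>p\<in>Sigma (splits w) (\<lambda>xv. splits (snd xv)). F (fst (fst p)) (fst (snd p)) (snd (snd p)))"
    by (subst sum.Sigma) (auto simp: case_prod_beta)
  also have "\<dots> = (\<Sum>(u,u',v)\<in>trip w. F u u' v)"
    by (rule sum.reindex_bij_witness[where i="\<lambda>(u,u',v). ((u,u'@v),(u',v))"
          and j="\<lambda>p. (fst (fst p), fst (snd p), snd (snd p))"])
       (auto simp: trip_def splits_def)
  finally show ?thesis .
qed

instantiation fa :: (comm_ring_1) ring_1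
begin
definition "zero_fa = Abs_fa (\<lambda>w. 0)"
definition "one_fa = Abs_fa (\<lambda>w. if w = [] then 1 else 0)"
definition "plus_fa a b = Abs_fa (\<lambda>w. Rep_fa a w + Rep_fa b w)"
definition "minus_fa a b = Abs_fa (\<lambda>w. Rep_fa a w - Rep_fa b w)"
definition "uminus_fa a = Abs_fa (\<lambda>w. - Rep_fa a w)"
definition "times_fa a b = Abs_fa (\<lambda>w. \<Sum>(u,v)\<in>splits w. Rep_fa a u * Rep_fa b v)"

lemma Rep_zero[simp]: "Rep_fa 0 w = 0" by (simp add: zero_fa_def Abs_fa_inverse)
lemma Rep_one: "Rep_fa 1 w = (if w = [] then 1 else 0)" by (simp add: one_fa_def Abs_fa_inverse)
lemma Rep_plus[simp]: "Rep_fa (a + b) w = Rep_fa a w + Rep_fa b w" by (simp add: plus_fa_def Abs_fa_inverse)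
lemma Rep_minus[simp]: "Rep_fa (a - b) w = Rep_fa a w - Rep_fa b w" by (simp add: minus_fa_def Abs_fa_inverse)
lemma Rep_uminus[simp]: "Rep_fa (- a) w = - Rep_fa a w" by (simp add: uminus_fa_def Abs_fa_inverse)
lemma Rep_times: "Rep_fa (a * b) w = (\<Sum>(u,v)\<in>splits w. Rep_fa a u * Rep_fa b v)" by (simp add: times_fa_def Abs_fa_inverse)

lemma fa_eqI: "(\<And>w. Rep_fa a w = Rep_fa b w) \<Longrightarrow> a = b"
  using Rep_fa_inject by (metis ext)

lemma splits_Nil_left: fixes f :: "nat list \<Rightarrow> nat list \<Rightarrow> 'a::comm_ring_1" shows "(\<Sum>(u,v)\<in>splits w. (if u = [] then 1 else 0) * f u v) = f [] w"
proof -
  have "(\<Sum>(u,v)\<in>splits w. (if u = [] then 1 else 0) * f u v) = (\<Sum>(u,v)\<in>{([],w)}. (if u = [] then 1 else 0) * f u v)"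
    by (rule sum.mono_neutral_right) (simp, auto simp: splits_def split: if_splits)
  then show ?thesis by simp
qed

lemma splits_Nil_right: fixes f :: "nat list \<Rightarrow> nat list \<Rightarrow> 'a::comm_ring_1" shows "(\<Sum>(u,v)\<in>splits w. f u v * (if v = [] then 1 else 0)) = f w []"
proof -
  have "(\<Sum>(u,v)\<in>splits w. f u v * (if v = [] then 1 else 0)) = (\<Sum>(u,v)\<in>{(w,[])}. f u v * (if v = [] then 1 else 0))"
    by (rule sum.mono_neutral_right) (simp, auto simp: splits_def split: if_splits)
  then show ?thesis by simp
qed

instance
proof
  fix a b c :: "'a fa"
  show "a * b * c = a * (b * c)"
  proof (rule fa_eqI)
    fix w
    have "Rep_fa (a * b * c) w = (\<Sum>(x,v)\<in>splits w. \<Sum>(u,u')\<in>splits x. Rep_fa a u * Rep_fa b u' * Rep_fa c v)"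
      by (simp add: Rep_times sum_distrib_right case_prod_beta)
    also have "\<dots> = (\<Sum>(u,u',v)\<in>trip w. Rep_fa a u * Rep_fa b u' * Rep_fa c v)"
      by (rule sum_splits_left)
    also have "\<dots> = (\<Sum>(u,y)\<in>splits w. \<Sum>(u',v)\<in>splits y. Rep_fa a u * Rep_fa b u' * Rep_fa c v)"
      by (rule sum_splits_right[symmetric])
    also have "\<dots> = Rep_fa (a * (b * c)) w"
      by (simp add: Rep_times sum_distrib_left case_prod_beta mult.assoc)
    finally show "Rep_fa (a * b * c) w = Rep_fa (a * (b * c)) w" .
  qed
  show "1 * a = a"
    by (rule fa_eqI) (simp add: Rep_times Rep_one splits_Nil_left)
  show "a * 1 = a"
    by (rule fa_eqI) (simp add: Rep_times Rep_one splits_Nil_right)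
  show "(a + b) * c = a * c + b * c"
    by (rule fa_eqI) (simp add: Rep_times distrib_right sum.distrib case_prod_beta)
  show "a * (b + c) = a * b + a * c"
    by (rule fa_eqI) (simp add: Rep_times distrib_left sum.distrib case_prod_beta)
  show "a + b + c = a + (b + c)" by (rule fa_eqI) (simp add: add.assoc)
  show "a + b = b + a" by (rule fa_eqI) (simp add: add.commute)
  show "0 + a = a" by (rule fa_eqI) simp
  show "- a + a = 0" by (rule fa_eqI) simp
  show "a - b = a + - b" by (rule fa_eqI) simp
  show "(0::'a fa) \<noteq> 1"
  proof
    assume "(0::'a fa) = 1"
    then have "Rep_fa (0::'a fa) [] = Rep_fa 1 []" by simp
    then show False by (simp add: Rep_one)
  qed
qed
end




definition scm :: "'k::comm_ring_1 \<Rightarrow> 'k fa \<Rightarrow> 'k fa" where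
  "scm c a = Abs_fa (\<lambda>w. c * Rep_fa a w)"

lemma Rep_scm[simp]: "Rep_fa (scm c a) w = c * Rep_fa a w"
  by (simp add: scm_def Abs_fa_inverse)

lemma scm_times_left[simp]: "scm c a * b = scm c (a * b)"
  by (rule fa_eqI) (simp add: Rep_times sum_distrib_left case_prod_beta mult.assoc)

lemma scm_times_right[simp]: "a * scm c b = scm c (a * b)"
  by (rule fa_eqI) (simp add: Rep_times sum_distrib_left case_prod_beta mult.left_commute)

lemma scm_scm[simp]: "scm c (scm d a) = scm (c * d) a"
  by (rule fa_eqI) (simp add: mult.assoc)

lemma scm_add: "scm c (a + b) = scm c a + scm c b"
  by (rule fa_eqI) (simp add: distrib_left)
lemma scm_diff: "scm c (a - b) = scm c a - scm c b"
  by (rule fa_eqI) (simp add: right_diff_distrib)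
lemma scm_add2: "scm (c + d) a = scm c a + scm d a"
  by (rule fa_eqI) (simp add: distrib_right)
lemma scm_diff2: "scm (c - d) a = scm c a - scm d a"
  by (rule fa_eqI) (simp add: left_diff_distrib)
lemma scm_uminus: "scm c (- a) = - scm c a"
  by (rule fa_eqI) simp
lemma scm_uminus2: "scm (- c) a = - scm c a"
  by (rule fa_eqI) simp
lemma scm_one[simp]: "scm 1 a = a"
  by (rule fa_eqI) simp
lemma scm_zero[simp]: "scm 0 a = 0" "scm c 0 = 0"
  by (rule fa_eqI, simp)+

lemmas scm_lin = scm_add scm_diff scm_uminus

definition br :: "'k::comm_ring_1 \<Rightarrow> 'k fa \<Rightarrow> 'k fa \<Rightarrow> 'k fa" where
  "br p a b = a * b - scm p (b * a)"

lemma jacobi: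
  "br (pac * pbc) (br pab a b) c
   = br (pab * pac) a (br pbc b c) - scm pab (b * br pac a c) + scm pbc (br pac a c * b)"
  by (simp add: br_def left_diff_distrib right_diff_distrib scm_lin mult.assoc algebra_simps)




definition fin :: "'k::comm_ring_1 fa \<Rightarrow> bool" where
  "fin a \<longleftrightarrow> finite {w. Rep_fa a w \<noteq> 0}"
definition lok :: "nat \<Rightarrow> 'k::comm_ring_1 fa \<Rightarrow> bool" where
  "lok n a \<longleftrightarrow> (\<forall>w. Rep_fa a w \<noteq> 0 \<longrightarrow> set w \<subseteq> {1..n})"
definition polys :: "nat \<Rightarrow> 'k::comm_ring_1 fa set" where
  "polys n = {a. fin a \<and> lok n a}"

definition mon :: "nat list \<Rightarrow> 'k::comm_ring_1 fa" where
  "mon w0 = Abs_fa (\<lambda>w. if w = w0 then 1 else 0)"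
lemma Rep_mon: "Rep_fa (mon w0) w = (if w = w0 then 1 else 0)"
  by (simp add: mon_def Abs_fa_inverse)

lemma polys_add[intro]: "a \<in> polys n \<Longrightarrow> b \<in> polys n \<Longrightarrow> a + b \<in> polys n"
proof -
  assume a: "a \<in> polys n" and b: "b \<in> polys n"
  have sub: "{w. Rep_fa (a + b) w \<noteq> 0} \<subseteq> {w. Rep_fa a w \<noteq> 0} \<union> {w. Rep_fa b w \<noteq> 0}" by auto
  have "fin (a+b)" unfolding fin_def
    by (rule finite_subset[OF sub]) (use a b in \<open>simp add: polys_def fin_def\<close>)
  moreover have "lok n (a+b)" using a b sub unfolding polys_def lok_def by blast
  ultimately show ?thesis by (simp add: polys_def)
qed

lemma polys_diff[intro]: "a \<in> polys n \<Longrightarrow> b \<in> polys n \<Longrightarrow> a - b \<in> polys n"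
proof -
  assume a: "a \<in> polys n" and b: "b \<in> polys n"
  have sub: "{w. Rep_fa (a - b) w \<noteq> 0} \<subseteq> {w. Rep_fa a w \<noteq> 0} \<union> {w. Rep_fa b w \<noteq> 0}" by auto
  have "fin (a-b)" unfolding fin_def
    by (rule finite_subset[OF sub]) (use a b in \<open>simp add: polys_def fin_def\<close>)
  moreover have "lok n (a-b)" using a b sub unfolding polys_def lok_def by blast
  ultimately show ?thesis by (simp add: polys_def)
qed

lemma polys_scm[intro]: "a \<in> polys n \<Longrightarrow> scm c a \<in> polys n"
proof -
  assume a: "a \<in> polys n"
  have sub: "{w. Rep_fa (scm c a) w \<noteq> 0} \<subseteq> {w. Rep_fa a w \<noteq> 0}" by auto
  have "fin (scm c a)" unfolding fin_def
    by (rule finite_subset[OF sub]) (use a in \<open>simp add: polys_def fin_def\<close>)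
  moreover have "lok n (scm c a)" using a sub unfolding polys_def lok_def by blast
  ultimately show ?thesis by (simp add: polys_def)
qed

lemma polys_times[intro]: "a \<in> polys n \<Longrightarrow> b \<in> polys n \<Longrightarrow> a * b \<in> polys n"
proof -
  assume a: "a \<in> polys n" and b: "b \<in> polys n"
  let ?A = "{w. Rep_fa a w \<noteq> 0}" and ?B = "{w. Rep_fa b w \<noteq> 0}"
  have key: "\<exists>u v. w = u @ v \<and> u \<in> ?A \<and> v \<in> ?B" if "Rep_fa (a * b) w \<noteq> 0" for w
  proof -
    from that have "(\<Sum>(u,v)\<in>splits w. Rep_fa a u * Rep_fa b v) \<noteq> 0" by (simp add: Rep_times)
    then obtain x where x: "x \<in> splits w" "(case x of (u,v) \<Rightarrow> Rep_fa a u * Rep_fa b v) \<noteq> 0"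
      by (rule sum.not_neutral_contains_not_neutral)
    obtain u v where xuv: "x = (u,v)" by force
    with x have "u @ v = w" "Rep_fa a u * Rep_fa b v \<noteq> 0" by (auto simp: splits_def)
    then show ?thesis by force
  qed
  have sub: "{w. Rep_fa (a * b) w \<noteq> 0} \<subseteq> (\<lambda>(u,v). u @ v) ` (?A \<times> ?B)"
  proof
    fix w assume "w \<in> {w. Rep_fa (a * b) w \<noteq> 0}"
    then obtain u v where "w = u @ v" "u \<in> ?A" "v \<in> ?B" using key by blast
    then show "w \<in> (\<lambda>(u,v). u @ v) ` (?A \<times> ?B)" by force
  qed
  have fA: "finite ?A" and fB: "finite ?B" using a b by (simp_all add: polys_def fin_def)
  have "fin (a*b)" unfolding fin_def
    by (rule finite_subset[OF sub]) (intro finite_imageI finite_cartesian_product fA fB)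
  moreover have "lok n (a*b)"
    unfolding lok_def
  proof (intro allI impI)
    fix w assume "Rep_fa (a * b) w \<noteq> 0"
    then obtain u v where "w = u @ v" "u \<in> ?A" "v \<in> ?B" using key by blast
    then show "set w \<subseteq> {1..n}" using a b unfolding polys_def lok_def by auto
  qed
  ultimately show ?thesis by (simp add: polys_def)
qed

lemma polys_mon[intro]: "set w \<subseteq> {1..n} \<Longrightarrow> mon w \<in> polys n"
proof -
  assume "set w \<subseteq> {1..n}"
  moreover have "{v. Rep_fa (mon w :: 'a fa) v \<noteq> 0} \<subseteq> {w}" by (auto simp: Rep_mon)
  ultimately show ?thesis unfolding polys_def fin_def lok_def
    by (auto simp: Rep_mon dest: finite_subset[OF _ finite.insertI[OF finite.emptyI]] split: if_splits)
qed

lemma polys_one[intro]: "1 \<in> polys n"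
proof -
  have "(1::'a fa) = mon []" by (rule fa_eqI) (simp add: Rep_one Rep_mon)
  moreover have "(mon [] :: 'a fa) \<in> polys n" by (rule polys_mon) simp
  ultimately show ?thesis by simp
qed

lemma polys_zero[intro]: "0 \<in> polys n"
  by (simp add: polys_def fin_def lok_def)

lemma polys_br[intro]: "a \<in> polys n \<Longrightarrow> b \<in> polys n \<Longrightarrow> br p a b \<in> polys n"
  unfolding br_def by auto

definition E :: "'k::comm_ring_1 fa \<Rightarrow> ('g::zero, 'k) elt" where
  "E a = (\<lambda>(g,w). if g = 0 then Rep_fa a w else 0)"

definition PE :: "('g::zero, 'k::comm_ring_1) elt \<Rightarrow> 'k fa" where
  "PE e = Abs_fa (\<lambda>w. e (0,w))"

lemma PE_E[simp]: "PE (E a) = a"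
  by (rule fa_eqI) (simp add: PE_def E_def Abs_fa_inverse)

lemma E_add: "E (a + b) = addv (E a) (E b)"
  by (auto simp: E_def addv_def)
lemma E_diff: "E (a - b) = subv (E a) (E b)"
  by (auto simp: E_def subv_def)
lemma E_scm: "E (scm c a) = smul c (E a)"
  by (auto simp: E_def smul_def)
lemma E_zero: "E 0 = (\<lambda>z. 0)"
  by (auto simp: E_def)
lemma E_mon1: "E (mon [i]) = X i"
  by (auto simp: E_def X_def Rep_mon)

lemma supp_E: "supp (E a) = (\<lambda>w. (0,w)) ` {w. Rep_fa a w \<noteq> 0}"
  by (auto simp: supp_def E_def split: if_splits)

lemma fsupp_E: "a \<in> polys n \<Longrightarrow> fsupp (E a)"
  by (simp add: fsupp_def supp_E polys_def fin_def)

lemma chiw_zero: "(\<forall>i\<in>set w. chi i 0 = 1) \<Longrightarrow> chiw chi w 0 = 1"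
  by (induction w) (auto simp: chiw_def)

lemma mul_E:
  fixes chi :: "nat \<Rightarrow> 'g::ab_group_add \<Rightarrow> 'k::field"
  assumes a: "a \<in> polys n" and b: "b \<in> polys n" and chi0: "\<forall>i\<in>{1..n}. chi i 0 = 1"
  shows "mul chi (E a) (E b) = (E (a * b) :: ('g,'k) elt)"
proof
  fix z :: "'g \<times> nat list"
  obtain g w where z: "z = (g,w)" by force
  let ?A = "{w. Rep_fa a w \<noteq> 0}" and ?B = "{w. Rep_fa b w \<noteq> 0}"
  have fA: "finite ?A" and fB: "finite ?B" using a b by (auto simp: polys_def fin_def)
  have inj: "inj_on (\<lambda>(u,v). ((0::'g,u),(0::'g,v))) (?A \<times> ?B)" by (auto simp: inj_on_def)
  have img: "supp (E a :: ('g,'k) elt) \<times> supp (E b :: ('g,'k) elt) = (\<lambda>(u,v). ((0::'g,u),(0::'g,v))) ` (?A \<times> ?B)"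
    by (auto simp: supp_E)
  have "mul chi (E a) (E b) z = (\<Sum>(u,v)\<in>?A \<times> ?B.
      if (0::'g) + 0 = g \<and> u @ v = w then Rep_fa a u * Rep_fa b v * chiw chi u 0 else 0)"
    unfolding mul_def z img by (subst sum.reindex[OF inj]) (auto simp: E_def case_prod_beta intro!: sum.cong)
  also have "\<dots> = (\<Sum>(u,v)\<in>?A \<times> ?B. if g = 0 \<and> u @ v = w then Rep_fa a u * Rep_fa b v else 0)"
  proof (intro sum.cong refl)
    fix x assume x: "x \<in> ?A \<times> ?B"
    then have "chiw chi (fst x) 0 = 1" using a chi0 unfolding polys_def lok_def
      by (intro chiw_zero) (auto dest!: spec[where x="fst x"])
    then show "(case x of (u,v) \<Rightarrow> if (0::'g) + 0 = g \<and> u @ v = w then Rep_fa a u * Rep_fa b v * chiw chi u 0 else 0)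
      = (case x of (u,v) \<Rightarrow> if g = 0 \<and> u @ v = w then Rep_fa a u * Rep_fa b v else 0)"
      by (auto simp: case_prod_beta)
  qed
  also have "\<dots> = E (a * b) z"
  proof (cases "g = 0")
    case False then show ?thesis by (simp add: z E_def)
  next
    case True
    have "(\<Sum>(u,v)\<in>?A \<times> ?B. if g = 0 \<and> u @ v = w then Rep_fa a u * Rep_fa b v else 0)
        = (\<Sum>(u,v)\<in>?A \<times> ?B. if (u,v) \<in> splits w then Rep_fa a u * Rep_fa b v else 0)"
      using True by (intro sum.cong) (auto simp: splits_def)
    also have "\<dots> = (\<Sum>(u,v)\<in>(?A \<times> ?B) \<inter> splits w. Rep_fa a u * Rep_fa b v)"
      using fA fB by (simp add: sum.inter_restrict case_prod_beta if_distrib)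
    also have "\<dots> = (\<Sum>(u,v)\<in>splits w. Rep_fa a u * Rep_fa b v)"
      by (rule sum.mono_neutral_left) auto
    finally show ?thesis using True by (simp add: z E_def Rep_times)
  qed
  finally show "mul chi (E a) (E b) z = E (a * b) z" .
qed




abbreviation xF :: "nat \<Rightarrow> 'k::comm_ring_1 fa" where "xF i \<equiv> mon [i]"

lemma prod_list_map_mult:
  "prod_list (map (\<lambda>a. f a * g a) u) = prod_list (map f u) * (prod_list (map g u) :: 'k::comm_monoid_mult)"
  by (induction u) (auto simp: ac_simps)

lemma set_btree_leaves: "set_btree t = set (leaves t)"
  by (induction t) auto

lemma deg_map: "deg (map_btree (\<lambda>(e,d). (f e, d)) t) = deg t"
  by (induction t) (auto simp: case_prod_beta)

lemma leaves_map: "leaves (map_btree f t) = map f (leaves t)"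
  by (induction t) auto

lemma jacobiP: "P = pac * pbc \<Longrightarrow> Q = pab * pac \<Longrightarrow>
   br P (br pab a b) c = br Q a (br pbc b c) - scm pab (b * br pac a c) + scm pbc (br pac a c * b)"
  by (simp add: jacobi)

lemma br_derivP: "R = pab * pac \<Longrightarrow> br R a (b * c) = br pab a b * c + scm pab (b * br pac a c)"
  by (simp add: br_def algebra_simps scm_lin)

lemma br_flip: "p * p' = 1 \<Longrightarrow> br p a b = scm (- p) (br p' b a)"
  by (simp add: br_def algebra_simps scm_lin scm_uminus2)

lemma br_scm_right: "br p a (scm c b) = scm c (br p a b)"
  by (simp add: br_def algebra_simps scm_lin)

lemma lnorm_snoc: "xs \<noteq> [] \<Longrightarrow> lnorm (xs @ [v]) = Nd (lnorm xs) (Lf v)"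
  by (cases xs) auto

lemma leaves_foldl: "leaves (foldl (\<lambda>t b. Nd t (Lf b)) t0 as) = leaves t0 @ as"
  by (induction as arbitrary: t0) auto

lemma leaves_lnorm: "xs \<noteq> [] \<Longrightarrow> leaves (lnorm xs) = xs"
  by (cases xs) (auto simp: leaves_foldl)

lemma leaves_ne: "leaves t \<noteq> []"
  by (induction t) auto

lemma deg_leaves: "deg t = concat (map snd (leaves t))"
  by (induction t) auto

lemma lnorm_single[simp]: "lnorm [v] = Lf v" by simp

locale soctx =
  fixes chi :: "nat \<Rightarrow> 'g::ab_group_add \<Rightarrow> 'k::field" and gs :: "nat \<Rightarrow> 'g" and n :: nat and q :: 'k
  assumes n3: "n \<ge> 3" and qm1: "q \<noteq> -1" and par: "so_params chi gs n q"
begin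

abbreviation PP where "PP \<equiv> pp chi gs"

lemma chi_hom: "i \<in> {1..n} \<Longrightarrow> chi i (a + b) = chi i a * chi i b"
  using par by (simp add: so_params_def)
lemma chi_nz: "i \<in> {1..n} \<Longrightarrow> chi i a \<noteq> 0"
  using par by (simp add: so_params_def)
lemma chi_0: "i \<in> {1..n} \<Longrightarrow> chi i 0 = 1"
proof -
  assume i: "i \<in> {1..n}"
  have "chi i 0 = chi i 0 * chi i 0" using chi_hom[OF i, of 0 0] by simp
  then show ?thesis using chi_nz[OF i, of 0] by simp
qed
lemma chi0_all: "\<forall>i\<in>{1..n}. chi i 0 = 1" using chi_0 by blast
lemma q_nz: "q \<noteq> 0"
proof -
  have "chi 1 (gs 1) = q" using par n3 by (simp add: so_params_def)
  then show ?thesis using chi_nz[of 1 "gs 1"] n3 by auto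
qed

lemma PP_append_left[simp]: "PP (u @ v) w = PP u w * PP v w"
  by (simp add: pp_def chiw_def)
lemma PP_Nil_left[simp]: "PP [] w = 1"
  by (simp add: pp_def chiw_def)
lemma PP_Cons_left: "PP (a # u) w = PP [a] w * PP u w"
  using PP_append_left[of "[a]" u w] by simp
lemma PP_Nil_right: "set u \<subseteq> {1..n} \<Longrightarrow> PP u [] = 1"
  by (induction u) (auto simp: pp_def chiw_def gw_def chi_0)
lemma PP_append_right: "set u \<subseteq> {1..n} \<Longrightarrow> PP u (v @ w) = PP u v * PP u w"
proof -
  assume u: "set u \<subseteq> {1..n}"
  have "PP u (v @ w) = prod_list (map (\<lambda>a. chi a (gw gs v) * chi a (gw gs w)) u)"
    unfolding pp_def chiw_def gw_def
    by (rule arg_cong[where f=prod_list], rule map_cong) (use u chi_hom in auto)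
  then show ?thesis by (simp add: prod_list_map_mult pp_def chiw_def)
qed
lemma PP_single: "PP [a] [b] = chi a (gs b)"
  by (simp add: pp_def chiw_def gw_def)
lemma PP_nz: "set u \<subseteq> {1..n} \<Longrightarrow> PP u v \<noteq> 0"
  by (induction u) (auto simp: pp_def chiw_def chi_nz)

definition K :: "'k fa set" where
  "K = {a \<in> polys n. (E a :: ('g,'k) elt) \<in> ideal_gen chi (rels chi gs n)}"

lemma K_polys: "a \<in> K \<Longrightarrow> a \<in> polys n" by (simp add: K_def)
lemma K_zero[intro]: "0 \<in> K"
  using ideal_gen.zero[of chi "rels chi gs n"] by (simp add: K_def E_zero polys_zero)
lemma K_add[intro]: "a \<in> K \<Longrightarrow> b \<in> K \<Longrightarrow> a + b \<in> K"
  unfolding K_def by (auto simp: E_add intro: ideal_gen.add)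
lemma K_lmul[intro]: "a \<in> K \<Longrightarrow> h \<in> polys n \<Longrightarrow> h * a \<in> K"
proof -
  assume a: "a \<in> K" and h: "h \<in> polys n"
  have "mul chi (E h) (E a) = (E (h * a) :: ('g,'k) elt)"
    using a h by (intro mul_E[where chi=chi, OF _ _ chi0_all]) (auto simp: K_def)
  moreover have "mul chi (E h) (E a :: ('g,'k) elt) \<in> ideal_gen chi (rels chi gs n)"
    using a h fsupp_E[OF h] by (intro ideal_gen.lmul) (auto simp: K_def)
  ultimately show ?thesis using a h by (auto simp: K_def)
qed
lemma K_rmul[intro]: "a \<in> K \<Longrightarrow> h \<in> polys n \<Longrightarrow> a * h \<in> K"
proof -
  assume a: "a \<in> K" and h: "h \<in> polys n"
  have "mul chi (E a) (E h) = (E (a * h) :: ('g,'k) elt)"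
    using a h by (intro mul_E[where chi=chi, OF _ _ chi0_all]) (auto simp: K_def)
  moreover have "mul chi (E a :: ('g,'k) elt) (E h) \<in> ideal_gen chi (rels chi gs n)"
    using a h fsupp_E[OF h] by (intro ideal_gen.rmul) (auto simp: K_def)
  ultimately show ?thesis using a h by (auto simp: K_def)
qed
lemma K_scm[intro]: "a \<in> K \<Longrightarrow> scm c a \<in> K"
proof -
  assume a: "a \<in> K"
  have "scm c 1 * a \<in> K" by (rule K_lmul[OF a]) auto
  then show ?thesis by simp
qed
lemma K_uminus[intro]: "a \<in> K \<Longrightarrow> - a \<in> K"
proof -
  assume "a \<in> K" then have "scm (-1) a \<in> K" by auto
  then show ?thesis by (simp add: scm_uminus2)
qed
lemma K_diff[intro]: "a \<in> K \<Longrightarrow> b \<in> K \<Longrightarrow> a - b \<in> K"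
  using K_add[of a "- b"] K_uminus[of b] by simp

lemma K_br_left[intro]: "a \<in> K \<Longrightarrow> b \<in> polys n \<Longrightarrow> br p a b \<in> K"
  unfolding br_def by (intro K_diff K_scm K_lmul K_rmul)
lemma K_br_right[intro]: "b \<in> K \<Longrightarrow> a \<in> polys n \<Longrightarrow> br p a b \<in> K"
  unfolding br_def by (intro K_diff K_scm K_lmul K_rmul)

lemma br_sub_left: "br p a b - br p a' b = br p (a - a') b"
  by (simp add: br_def algebra_simps scm_lin)
lemma br_sub_right: "br p a b - br p a b' = br p a (b - b')"
  by (simp add: br_def algebra_simps scm_lin)

lemma K_br_cong_left: "a - a' \<in> K \<Longrightarrow> b \<in> polys n \<Longrightarrow> br p a b - br p a' b \<in> K"
  by (simp add: br_sub_left K_br_left)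
lemma K_br_cong_right: "b - b' \<in> K \<Longrightarrow> a \<in> polys n \<Longrightarrow> br p a b - br p a b' \<in> K"
  by (simp add: br_sub_right K_br_right)

fun evF :: "('k fa \<times> nat list) btree \<Rightarrow> 'k fa" where
  "evF (Lf a) = fst a"
| "evF (Nd l r) = br (PP (deg l) (deg r)) (evF l) (evF r)"

definition good :: "('k fa \<times> nat list) list \<Rightarrow> bool" where
  "good L \<longleftrightarrow> (\<forall>x\<in>set L. fst x \<in> polys n \<and> set (snd x) \<subseteq> {1..n})"

lemma evF_polys: "good (leaves t) \<Longrightarrow> evF t \<in> polys n"
  by (induction t) (auto simp: good_def)

lemma conn: "good (leaves t) \<Longrightarrow> ev chi gs (map_btree (\<lambda>(e,d). (E e, d)) t) = E (evF t)"
proof (induction t)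
  case (Lf a) then show ?case by (simp add: case_prod_beta)
next
  case (Nd l r)
  then have gl: "good (leaves l)" and gr: "good (leaves r)" by (auto simp: good_def)
  have pl: "evF l \<in> polys n" and pr: "evF r \<in> polys n" using evF_polys gl gr by auto
  have m1: "mul chi (E (evF l)) (E (evF r)) = (E (evF l * evF r) :: ('g,'k) elt)"
    by (rule mul_E[where chi=chi, OF pl pr chi0_all])
  have m2: "mul chi (E (evF r)) (E (evF l)) = (E (evF r * evF l) :: ('g,'k) elt)"
    by (rule mul_E[where chi=chi, OF pr pl chi0_all])
  show ?case
    using Nd.IH gl gr
    by (simp add: sbr_def deg_map m1 m2 br_def E_diff E_scm)
qed

abbreviation xf :: "nat \<Rightarrow> ('k fa \<times> nat list) btree" where "xf i \<equiv> Lf (xF i, [i])"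

lemma xl_map: "xl i = map_btree (\<lambda>(e,d). (E e, d)) (xf i)"
  by (simp add: xl_def xa_def E_mon1)

lemma rel_K: "good (leaves t) \<Longrightarrow> ev chi gs (map_btree (\<lambda>(e,d). (E e, d)) t) \<in> rels chi gs n \<Longrightarrow> evF t \<in> K"
  using conn[of t] evF_polys[of t] ideal_gen.gen[of _ "rels chi gs n" chi] by (auto simp: K_def)

lemma good_xf: "i \<in> {1..n} \<Longrightarrow> good [(xF i, [i])]"
  by (auto simp: good_def)

lemma relS1: "1 \<le> i \<Longrightarrow> i \<le> n - 2 \<Longrightarrow>
  br (PP [i] [i,i+1]) (xF i) (br (PP [i] [i+1]) (xF i) (xF (i+1))) \<in> K"
proof -
  assume i: "1 \<le> i" "i \<le> n - 2"
  let ?t = "Nd (xf i) (Nd (xf i) (xf (i+1))) :: ('k fa \<times> nat list) btree"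
  have g: "good (leaves ?t)" using i n3 by (auto simp: good_def)
  have eq: "map_btree (\<lambda>(e,d). (E e, d)) ?t = Nd (xl i) (Nd (xl i) (xl (i+1)))"
    by (simp add: xl_def xa_def E_mon1)
  have "ev chi gs (map_btree (\<lambda>(e,d). (E e, d)) ?t) \<in> rels chi gs n"
    unfolding eq unfolding rels_def by (rule UnI1, rule UnI1, rule UnI1, rule UnI1, rule UnI1) (use i in auto)
  then have "evF ?t \<in> K" by (rule rel_K[OF g])
  then show ?thesis by simp
qed


lemma relS2: "1 \<le> i \<Longrightarrow> i \<le> n - 2 \<Longrightarrow>
  br (PP [i,i+1] [i+1]) (br (PP [i] [i+1]) (xF i) (xF (i+1))) (xF (i+1)) \<in> K"
proof -
  assume i: "1 \<le> i" "i \<le> n - 2"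
  let ?t = "Nd (Nd (xf i) (xf (i+1))) (xf (i+1)) :: ('k fa \<times> nat list) btree"
  have g: "good (leaves ?t)" using i n3 by (auto simp: good_def)
  have eq: "map_btree (\<lambda>(e,d). (E e, d)) ?t = Nd (Nd (xl i) (xl (i+1))) (xl (i+1))"
    by (simp add: xl_def xa_def E_mon1)
  have "ev chi gs (map_btree (\<lambda>(e,d). (E e, d)) ?t) \<in> rels chi gs n"
    unfolding eq unfolding rels_def by (rule UnI1, rule UnI1, rule UnI1, rule UnI1, rule UnI2) (use i in auto)
  then have "evF ?t \<in> K" by (rule rel_K[OF g])
  then show ?thesis by simp
qed

lemma relN1: "br (PP [n-2] [n-2,n]) (xF (n-2)) (br (PP [n-2] [n]) (xF (n-2)) (xF n)) \<in> K"
proof -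
  let ?t = "Nd (xf (n-2)) (Nd (xf (n-2)) (xf n)) :: ('k fa \<times> nat list) btree"
  have g: "good (leaves ?t)" using n3 by (auto simp: good_def)
  have eq: "map_btree (\<lambda>(e,d). (E e, d)) ?t = Nd (xl (n-2)) (Nd (xl (n-2)) (xl n))"
    by (simp add: xl_def xa_def E_mon1)
  have "ev chi gs (map_btree (\<lambda>(e,d). (E e, d)) ?t) \<in> rels chi gs n"
    unfolding eq unfolding rels_def by (rule UnI1, rule UnI1, rule UnI1, rule UnI2) auto
  then have "evF ?t \<in> K" by (rule rel_K[OF g])
  then show ?thesis by simp
qed

lemma relN2: "br (PP [n-2,n] [n]) (br (PP [n-2] [n]) (xF (n-2)) (xF n)) (xF n) \<in> K"
proof -
  let ?t = "Nd (Nd (xf (n-2)) (xf n)) (xf n) :: ('k fa \<times> nat list) btree"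
  have g: "good (leaves ?t)" using n3 by (auto simp: good_def)
  have eq: "map_btree (\<lambda>(e,d). (E e, d)) ?t = Nd (Nd (xl (n-2)) (xl n)) (xl n)"
    by (simp add: xl_def xa_def E_mon1)
  have "ev chi gs (map_btree (\<lambda>(e,d). (E e, d)) ?t) \<in> rels chi gs n"
    unfolding eq unfolding rels_def by (rule UnI1, rule UnI1, rule UnI1, rule UnI2) auto
  then have "evF ?t \<in> K" by (rule rel_K[OF g])
  then show ?thesis by simp
qed

lemma relC: "1 \<le> i \<Longrightarrow> i + 1 < j \<Longrightarrow> j \<le> n - 1 \<Longrightarrow> br (PP [i] [j]) (xF i) (xF j) \<in> K"
proof -
  assume i: "1 \<le> i" "i + 1 < j" "j \<le> n - 1"
  let ?t = "Nd (xf i) (xf j) :: ('k fa \<times> nat list) btree"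
  have g: "good (leaves ?t)" using i n3 by (auto simp: good_def)
  have eq: "map_btree (\<lambda>(e,d). (E e, d)) ?t = Nd (xl i) (xl j)"
    by (simp add: xl_def xa_def E_mon1)
  have "ev chi gs (map_btree (\<lambda>(e,d). (E e, d)) ?t) \<in> rels chi gs n"
    unfolding eq unfolding rels_def by (rule UnI1, rule UnI1, rule UnI2, rule CollectI, rule exI[of _ i], rule exI[of _ j]) (use i in simp)
  then have "evF ?t \<in> K" by (rule rel_K[OF g])
  then show ?thesis by simp
qed

lemma relCn: "1 \<le> i \<Longrightarrow> i \<le> n - 3 \<Longrightarrow> br (PP [i] [n]) (xF i) (xF n) \<in> K"
proof -
  assume i: "1 \<le> i" "i \<le> n - 3"
  let ?t = "Nd (xf i) (xf n) :: ('k fa \<times> nat list) btree"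
  have g: "good (leaves ?t)" using i n3 by (auto simp: good_def)
  have eq: "map_btree (\<lambda>(e,d). (E e, d)) ?t = Nd (xl i) (xl n)"
    by (simp add: xl_def xa_def E_mon1)
  have "ev chi gs (map_btree (\<lambda>(e,d). (E e, d)) ?t) \<in> rels chi gs n"
    unfolding eq unfolding rels_def by (rule UnI1, rule UnI2) (use i in auto)
  then have "evF ?t \<in> K" by (rule rel_K[OF g])
  then show ?thesis by simp
qed

lemma K_trans: "a - b \<in> K \<Longrightarrow> b - c \<in> K \<Longrightarrow> a - c \<in> K"
  using K_add[of "a - b" "b - c"] by simp

lemma K_sym: "a - b \<in> K \<Longrightarrow> b - a \<in> K"
  using K_uminus[of "a - b"] by simp

lemma K_eq_mem: "a - b \<in> K \<Longrightarrow> b \<in> K \<Longrightarrow> a \<in> K"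
  using K_add[of "a - b" b] by simp

lemma J1: "a \<in> polys n \<Longrightarrow> b \<in> polys n \<Longrightarrow> c \<in> polys n \<Longrightarrow>
   br pac a c \<in> K \<Longrightarrow> br pbc b c \<in> K \<Longrightarrow> br (pac * pbc) (br pab a b) c \<in> K"
proof -
  assume a: "a \<in> polys n" and b: "b \<in> polys n" and c: "c \<in> polys n"
     and h1: "br pac a c \<in> K" and h2: "br pbc b c \<in> K"
  have t1: "br (pab * pac) a (br pbc b c) \<in> K" by (rule K_br_right[OF h2 a])
  have t2: "scm pab (b * br pac a c) \<in> K" by (rule K_scm, rule K_lmul[OF h1 b])
  have t3: "scm pbc (br pac a c * b) \<in> K" by (rule K_scm, rule K_rmul[OF h1 b])
  show ?thesis by (subst jacobiP[OF refl refl]) (intro K_add K_diff t1 t2 t3)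
qed

lemma Jassoc: "a \<in> polys n \<Longrightarrow> b \<in> polys n \<Longrightarrow> c \<in> polys n \<Longrightarrow>
   br pac a c \<in> K \<Longrightarrow> br (pac * pbc) (br pab a b) c - br (pab * pac) a (br pbc b c) \<in> K"
proof -
  assume a: "a \<in> polys n" and b: "b \<in> polys n" and c: "c \<in> polys n" and h: "br pac a c \<in> K"
  have "br (pac * pbc) (br pab a b) c - br (pab * pac) a (br pbc b c)
      = scm pbc (br pac a c * b) - scm pab (b * br pac a c)"
    by (subst jacobiP[OF refl refl]) (simp add: algebra_simps)
  also have "\<dots> \<in> K" using h a b by (intro K_diff K_scm K_lmul K_rmul)
  finally show ?thesis .
qed

lemma Zleaf: "good (leaves T) \<Longrightarrow> f \<in> polys n \<Longrightarrow>
   (\<forall>x\<in>set (leaves T). br (PP (snd x) dv) (fst x) f \<in> K) \<Longrightarrow> br (PP (deg T) dv) (evF T) f \<in> K"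
proof (induction T)
  case (Lf a) then show ?case by simp
next
  case (Nd l r)
  then have gl: "good (leaves l)" and gr: "good (leaves r)" by (auto simp: good_def)
  have "br (PP (deg l) dv * PP (deg r) dv) (br (PP (deg l) (deg r)) (evF l) (evF r)) f \<in> K"
    using Nd gl gr by (intro J1 evF_polys) auto
  then show ?case by simp
qed

definition CC :: "('k fa \<times> nat list) list \<Rightarrow> bool" where
  "CC L \<longleftrightarrow> (\<forall>i j. i + 1 < j \<and> j < length L \<longrightarrow>
      br (PP (snd (L!i)) (snd (L!j))) (fst (L!i)) (fst (L!j)) \<in> K)"

lemma CC_appendD: "CC (xs @ ys) \<Longrightarrow> CC xs \<and> CC ys"
proof -
  assume c: "CC (xs @ ys)"
  have "CC xs" unfolding CC_def
  proof (intro allI impI)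
    fix i j assume ij: "i + 1 < j \<and> j < length xs"
    then show "br (PP (snd (xs!i)) (snd (xs!j))) (fst (xs!i)) (fst (xs!j)) \<in> K"
      using c[unfolded CC_def, rule_format, of i j] by (simp add: nth_append)
  qed
  moreover have "CC ys" unfolding CC_def
  proof (intro allI impI)
    fix i j assume ij: "i + 1 < j \<and> j < length ys"
    then show "br (PP (snd (ys!i)) (snd (ys!j))) (fst (ys!i)) (fst (ys!j)) \<in> K"
      using c[unfolded CC_def, rule_format, of "length xs + i" "length xs + j"] by (simp add: nth_append)
  qed
  ultimately show ?thesis by simp
qed

lemma good_append[simp]: "good (xs @ ys) \<longleftrightarrow> good xs \<and> good ys"
  by (auto simp: good_def)


lemma good_set_deg: "good L \<Longrightarrow> set (concat (map snd L)) \<subseteq> {1..n}"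
  by (auto simp: good_def)

lemma indep: "good (leaves t) \<Longrightarrow> CC (leaves t) \<Longrightarrow> evF t - evF (lnorm (leaves t)) \<in> K"
proof (induction "length (leaves t)" arbitrary: t rule: less_induct)
  case less
  show ?case
  proof (cases t)
    case (Lf a) then show ?thesis by (simp add: K_zero)
  next
    case (Nd l r)
    define L1 where "L1 = leaves l"
    define L2 where "L2 = leaves r"
    have ne1: "L1 \<noteq> []" and ne2: "L2 \<noteq> []" by (simp_all add: L1_def L2_def leaves_ne)
    have lt: "leaves t = L1 @ L2" by (simp add: Nd L1_def L2_def)
    have g1: "good L1" and g2: "good L2" using less.prems(1) lt by auto
    have c1: "CC L1" and c2: "CC L2" using less.prems(2) lt CC_appendD by metis+
    have IHl: "evF l - evF (lnorm L1) \<in> K"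
      using less.hyps[of l] g1 c1 ne2 lt by (simp add: L1_def)
    have IHr: "evF r - evF (lnorm L2) \<in> K"
      using less.hyps[of r] g2 c2 ne1 lt by (simp add: L2_def)
    have pl: "evF l \<in> polys n" and pr: "evF r \<in> polys n"
      using evF_polys g1 g2 by (auto simp: L1_def L2_def)
    have pl': "evF (lnorm L1) \<in> polys n" and pr': "evF (lnorm L2) \<in> polys n"
      using evF_polys g1 g2 ne1 ne2 by (auto simp: leaves_lnorm)
    define p where "p = PP (concat (map snd L1)) (concat (map snd L2))"
    have evt: "evF t = br p (evF l) (evF r)"
      by (simp add: Nd p_def deg_leaves L1_def L2_def)
    have s1: "evF t - br p (evF (lnorm L1)) (evF (lnorm L2)) \<in> K"
      unfolding evt
      by (rule K_trans[OF K_br_cong_left[OF IHl pr] K_br_cong_right[OF IHr pl']])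
    obtain L2' v where L2v: "L2 = L2' @ [v]" using ne2 by (metis rev_exhaust)
    show ?thesis
    proof (cases "L2' = []")
      case True
      have "evF (lnorm (leaves t)) = br p (evF (lnorm L1)) (evF (lnorm L2))"
        using True L2v lt ne1 by (simp add: lnorm_snoc p_def deg_leaves leaves_lnorm)
      then show ?thesis using s1 by simp
    next
      case False
      define X where "X = evF (lnorm L1)"
      define Y where "Y = evF (lnorm L2')"
      define c1' where "c1' = concat (map snd L1)"
      define c2' where "c2' = concat (map snd L2')"
      have gv: "good [v]" and g2': "good L2'" using g2 L2v by auto
      have pX: "X \<in> polys n" using pl' by (simp add: X_def)
      have pY: "Y \<in> polys n" using evF_polys g2' False by (auto simp: Y_def leaves_lnorm)
      have pf: "fst v \<in> polys n" using gv by (simp add: good_def)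
      have sc1: "set c1' \<subseteq> {1..n}" using good_set_deg[OF g1] by (simp add: c1'_def)
      have evr: "evF (lnorm L2) = br (PP c2' (snd v)) Y (fst v)"
        using False by (simp add: L2v lnorm_snoc Y_def c2'_def deg_leaves leaves_lnorm)
      have pexp: "p = PP c1' c2' * PP c1' (snd v)"
        by (simp add: p_def L2v c1'_def c2'_def PP_append_right[OF sc1[unfolded c1'_def]])
      have Z: "br (PP c1' (snd v)) X (fst v) \<in> K"
      proof -
        have "br (PP (deg (lnorm L1)) (snd v)) (evF (lnorm L1)) (fst v) \<in> K"
        proof (rule Zleaf)
          show "good (leaves (lnorm L1))" using g1 ne1 by (simp add: leaves_lnorm)
          show "fst v \<in> polys n" by (rule pf)
          show "\<forall>x\<in>set (leaves (lnorm L1)). br (PP (snd x) (snd v)) (fst x) (fst v) \<in> K"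
          proof
            fix x assume "x \<in> set (leaves (lnorm L1))"
            then obtain i where i: "i < length L1" "x = L1 ! i" using ne1 by (auto simp: leaves_lnorm in_set_conv_nth)
            let ?j = "length L1 + length L2'"
            have "i + 1 < ?j" using i False by (cases L2') auto
            moreover have "?j < length (leaves t)" using lt L2v by simp
            ultimately have "br (PP (snd (leaves t ! i)) (snd (leaves t ! ?j))) (fst (leaves t ! i)) (fst (leaves t ! ?j)) \<in> K"
              using less.prems(2) unfolding CC_def by blast
            moreover have "leaves t ! i = x" using i lt by (simp add: nth_append)
            moreover have "leaves t ! ?j = v" using lt L2v by (simp add: nth_append)
            ultimately show "br (PP (snd x) (snd v)) (fst x) (fst v) \<in> K" by simp
          qed
        qed
        then show ?thesis using ne1 by (simp add: X_def c1'_def deg_leaves leaves_lnorm)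
      qed
      have s2: "br p X (evF (lnorm L2)) - br (PP c1' (snd v) * PP c2' (snd v)) (br (PP c1' c2') X Y) (fst v) \<in> K"
        unfolding evr pexp
        by (rule K_sym, rule Jassoc[OF pX pY pf Z])
      define t' where "t' = Nd (lnorm L1) (lnorm L2')"
      have lt': "leaves t' = L1 @ L2'" using ne1 False by (simp add: t'_def leaves_lnorm)
      have evt': "evF t' = br (PP c1' c2') X Y"
        using ne1 False by (simp add: t'_def X_def Y_def c1'_def c2'_def deg_leaves leaves_lnorm)
      have IH': "evF t' - evF (lnorm (L1 @ L2')) \<in> K"
      proof -
        have "length (leaves t') < length (leaves t)" using lt lt' L2v by simp
        moreover have "good (leaves t')" using g1 g2' lt' by simp
        moreover have "CC (leaves t')" using less.prems(2) lt lt' L2v CC_appendD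
          by (metis append_assoc)
        ultimately show ?thesis using less.hyps[of t'] lt' by simp
      qed
      have pt': "evF (lnorm (L1 @ L2')) \<in> polys n"
        using evF_polys[of "lnorm (L1 @ L2')"] g1 g2' ne1 by (simp add: leaves_lnorm)
      have s3: "br (PP (c1' @ c2') (snd v)) (evF t') (fst v) - br (PP (c1' @ c2') (snd v)) (evF (lnorm (L1 @ L2'))) (fst v) \<in> K"
        by (rule K_br_cong_left[OF IH' pf])
      have fin: "evF (lnorm (leaves t)) = br (PP (c1' @ c2') (snd v)) (evF (lnorm (L1 @ L2'))) (fst v)"
      proof -
        have "lnorm (leaves t) = Nd (lnorm (L1 @ L2')) (Lf v)"
          using lnorm_snoc[of "L1 @ L2'" v] ne1 lt L2v by simp
        then show ?thesis using ne1 by (simp add: c1'_def c2'_def deg_leaves leaves_lnorm)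
      qed
      have "evF t - br p X (evF (lnorm L2)) \<in> K" using s1 by (simp add: X_def)
      then have "evF t - br (PP c1' (snd v) * PP c2' (snd v)) (br (PP c1' c2') X Y) (fst v) \<in> K"
        by (rule K_trans[OF _ s2])
      then have "evF t - br (PP (c1' @ c2') (snd v)) (evF t') (fst v) \<in> K"
        by (simp add: evt')
      then show ?thesis using K_trans[OF _ s3] fin by simp
    qed
  qed
qed


lemma key:
  assumes pA: "A \<in> polys n" and pb: "b \<in> polys n" and pc: "c \<in> polys n"
  and H1: "br (pAb * q) (br pAb A b) b \<in> K"
  and H2: "br pAc A c \<in> K"
  and H3: "br (q * pbc) b (br pbc b c) \<in> K"
  and pr: "pbc * pcb * q = 1"
  shows "br (pAb * q * pcb) (br (pAc * pbc) (br pAb A b) c) b \<in> K"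
proof -
  define u where "u = br pAb A b"
  define w where "w = br pbc b c"
  define z where "z = br (pAb * pAc) A w"
  have pu: "u \<in> polys n" and pw: "w \<in> polys n" and pz: "z \<in> polys n"
    using pA pb pc by (auto simp: u_def w_def z_def)
  have pbc_nz: "pbc \<noteq> 0" using pr by auto
  have qnz: "q \<noteq> 0" by (rule q_nz)
  have pcb_eq: "pcb = 1 / (q * pbc)" using pr pbc_nz qnz by (simp add: field_simps)
  define P where "P = pAb * q * pcb"
  define T where "T = br P (br (pAc * pbc) u c) b"
  define Zz where "Zz = br P z b"
  have a: "br (pAc * pbc) u c - z \<in> K"
    unfolding u_def z_def w_def by (rule Jassoc[OF pA pb pc H2])
  have sb: "T - Zz \<in> K" unfolding T_def Zz_def by (rule K_br_cong_left[OF a pb])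
  define R where "R = pAc * pbc * (pAb * q)"
  have sc: "T - br R u (br pcb c b) \<in> K"
    unfolding T_def P_def R_def using Jassoc[OF pu pc pb H1[folded u_def], of pcb "pAc * pbc"] by simp
  have d: "br pcb c b = scm (inverse pbc) (scm ((q - 1) / q) (b * c) - w)"
    unfolding w_def br_def pcb_eq
    by (rule fa_eqI) (simp add: field_simps pbc_nz qnz)
  have e: "br R u (br pcb c b) = scm (inverse pbc) (scm ((q - 1) / q) (br R u (b * c)) - br R u w)"
    unfolding d by (simp add: br_scm_right br_sub_right[symmetric])
  define D1 where "D1 = br R u (b * c) - scm (pAb * q) (b * z)"
  define D2 where "D2 = br R u w - (scm (q * pbc) (z * b) - scm pAb (b * z))"
  have D1K: "D1 \<in> K"
  proof -
    have "br R u (b * c) = br (pAb * q) u b * c + scm (pAb * q) (b * br (pAc * pbc) u c)"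
      by (rule br_derivP) (simp add: R_def ac_simps)
    then have "D1 = br (pAb * q) u b * c + scm (pAb * q) (b * (br (pAc * pbc) u c - z))"
      by (simp add: D1_def algebra_simps scm_lin)
    also have "\<dots> \<in> K" using H1[folded u_def] a pb pc by (intro K_add K_rmul K_scm K_lmul)
    finally show ?thesis .
  qed
  have D2K: "D2 \<in> K"
  proof -
    have "br R u w = br (pAb * (pAb * pAc)) A (br (q * pbc) b w) - scm pAb (b * br (pAb * pAc) A w)
        + scm (q * pbc) (br (pAb * pAc) A w * b)"
      unfolding u_def by (rule jacobiP) (simp_all add: R_def ac_simps)
    then have "D2 = br (pAb * (pAb * pAc)) A (br (q * pbc) b w)"
      by (simp add: D2_def z_def algebra_simps)
    also have "\<dots> \<in> K" using H3[folded w_def] pA by (rule K_br_right)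
    finally show ?thesis .
  qed
  define Y where "Y = scm (inverse pbc) (scm ((q - 1) / q) (scm (pAb * q) (b * z)) - (scm (q * pbc) (z * b) - scm pAb (b * z)))"
  have sY: "br R u (br pcb c b) - Y = scm (inverse pbc) (scm ((q - 1) / q) D1 - D2)"
    unfolding e Y_def D1_def D2_def by (simp add: scm_lin algebra_simps)
  have sY': "br R u (br pcb c b) - Y \<in> K" unfolding sY using D1K D2K by (intro K_scm K_diff)
  have Yeq: "Y = - scm q Zz"
    unfolding Y_def Zz_def br_def P_def pcb_eq
    by (rule fa_eqI) (simp add: field_simps pbc_nz qnz)
  have "T - Y \<in> K" by (rule K_trans[OF sc sY'])
  then have t1: "T + scm q Zz \<in> K" using Yeq by simp
  have "(T + scm q Zz) - (T - Zz) \<in> K" using t1 sb by (rule K_diff)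
  then have "scm (1 + q) Zz \<in> K" by (simp add: scm_add2 algebra_simps)
  then have "scm (inverse (1 + q)) (scm (1 + q) Zz) \<in> K" by (rule K_scm)
  moreover have "1 + q \<noteq> 0" using qm1 by (metis add.commute add_eq_0_iff2)
  ultimately have ZK: "Zz \<in> K" by simp
  have "T \<in> K" by (rule K_eq_mem[OF sb ZK])
  then show ?thesis by (simp add: T_def P_def u_def)
qed


definition at :: "nat \<Rightarrow> 'k fa \<times> nat list" where "at a = (xF a, [a])"

lemma concat_at[simp]: "concat (map snd (map at xs)) = xs"
  by (induction xs) (auto simp: at_def)

definition W :: "nat list \<Rightarrow> nat \<Rightarrow> 'k fa" where
  "W vs s = evF (lnorm (map at (take s vs)))"

lemma good_at: "set xs \<subseteq> {1..n} \<Longrightarrow> good (map at xs)"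
  unfolding good_def at_def by (auto intro!: polys_mon)

lemma concat_at2[simp]: "concat (map (snd \<circ> at) xs) = xs"
  by (induction xs) (auto simp: at_def)

lemma W_polys: "set vs \<subseteq> {1..n} \<Longrightarrow> 1 \<le> s \<Longrightarrow> s \<le> length vs \<Longrightarrow> W vs s \<in> polys n"
  unfolding W_def
  by (rule evF_polys, subst leaves_lnorm) (auto intro!: good_at dest: in_set_takeD)

lemma W_1: "vs \<noteq> [] \<Longrightarrow> W vs 1 = xF (vs!0)"
  by (cases vs) (auto simp: W_def at_def)

lemma W_Suc: "1 \<le> s \<Longrightarrow> s < length vs \<Longrightarrow>
   W vs (Suc s) = br (PP (take s vs) [vs!s]) (W vs s) (xF (vs!s))"
proof -
  assume s: "1 \<le> s" "s < length vs"
  have tk: "take (Suc s) vs = take s vs @ [vs!s]" using s by (simp add: take_Suc_conv_app_nth)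
  have ne: "map at (take s vs) \<noteq> []" using s by auto
  show ?thesis unfolding W_def tk using ne
    by (simp add: lnorm_snoc deg_leaves leaves_lnorm at_def)
qed

definition chainok :: "nat list \<Rightarrow> bool" where
  "chainok vs \<longleftrightarrow> set vs \<subseteq> {1..n} \<and> (\<forall>a\<in>set vs. PP [a] [a] = q)
   \<and> (\<forall>i. Suc i < length vs \<longrightarrow> PP [vs!i] [vs!Suc i] * PP [vs!Suc i] [vs!i] * q = 1)
   \<and> (\<forall>i. Suc i < length vs \<longrightarrow>
        br (PP [vs!i] [vs!i, vs!Suc i]) (xF (vs!i)) (br (PP [vs!i] [vs!Suc i]) (xF (vs!i)) (xF (vs!Suc i))) \<in> K)
   \<and> (\<forall>i. Suc i < length vs \<longrightarrow>
        br (PP [vs!i, vs!Suc i] [vs!Suc i]) (br (PP [vs!i] [vs!Suc i]) (xF (vs!i)) (xF (vs!Suc i))) (xF (vs!Suc i)) \<in> K)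
   \<and> (\<forall>i j. i + 1 < j \<and> j < length vs \<longrightarrow>
        PP [vs!i] [vs!j] * PP [vs!j] [vs!i] = 1 \<and> br (PP [vs!i] [vs!j]) (xF (vs!i)) (xF (vs!j)) \<in> K)"

context
  fixes vs assumes ch: "chainok vs"
begin

lemma ch_far: "i + 1 < j \<Longrightarrow> j < length vs \<Longrightarrow>
  PP [vs!i] [vs!j] * PP [vs!j] [vs!i] = 1 \<and> br (PP [vs!i] [vs!j]) (xF (vs!i)) (xF (vs!j)) \<in> K"
  using ch unfolding chainok_def by blast
lemma ch_adj: "Suc i < length vs \<Longrightarrow> PP [vs!i] [vs!Suc i] * PP [vs!Suc i] [vs!i] * q = 1"
  using ch unfolding chainok_def by blast
lemma ch_R1: "Suc i < length vs \<Longrightarrow>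
  br (PP [vs!i] [vs!i, vs!Suc i]) (xF (vs!i)) (br (PP [vs!i] [vs!Suc i]) (xF (vs!i)) (xF (vs!Suc i))) \<in> K"
  using ch unfolding chainok_def by blast
lemma ch_R2: "Suc i < length vs \<Longrightarrow>
  br (PP [vs!i, vs!Suc i] [vs!Suc i]) (br (PP [vs!i] [vs!Suc i]) (xF (vs!i)) (xF (vs!Suc i))) (xF (vs!Suc i)) \<in> K"
  using ch unfolding chainok_def by blast
lemma ch_set: "set vs \<subseteq> {1..n}" using ch by (simp add: chainok_def)
lemma ch_nth: "i < length vs \<Longrightarrow> vs!i \<in> {1..n}" using ch_set by (meson nth_mem subsetD)
lemma ch_xF: "i < length vs \<Longrightarrow> xF (vs!i) \<in> polys n"
  using ch_nth by (intro polys_mon) auto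
lemma ch_q: "i < length vs \<Longrightarrow> PP [vs!i] [vs!i] = q" using ch nth_mem unfolding chainok_def by blast
lemma ch_Wp: "1 \<le> s \<Longrightarrow> s \<le> length vs \<Longrightarrow> W vs s \<in> polys n" using W_polys ch_set by blast

lemma S1: "1 \<le> s \<Longrightarrow> s < l \<Longrightarrow> l < length vs \<Longrightarrow>
   br (PP (take s vs) [vs!l]) (W vs s) (xF (vs!l)) \<in> K"
proof -
  assume sl: "1 \<le> s" "s < l" "l < length vs"
  have ne: "map at (take s vs) \<noteq> []" using sl by auto
  have lv: "leaves (lnorm (map at (take s vs))) = map at (take s vs)" by (rule leaves_lnorm[OF ne])
  have st: "set (take s vs) \<subseteq> {1..n}" using ch_set set_take_subset by (rule order_trans[rotated])
  have "br (PP (deg (lnorm (map at (take s vs)))) [vs!l]) (evF (lnorm (map at (take s vs)))) (xF (vs!l)) \<in> K"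
  proof (rule Zleaf)
    show "good (leaves (lnorm (map at (take s vs))))" unfolding lv by (rule good_at[OF st])
    show "xF (vs!l) \<in> polys n" using sl(3) by (rule ch_xF)
    show "\<forall>x\<in>set (leaves (lnorm (map at (take s vs)))). br (PP (snd x) [vs ! l]) (fst x) (xF (vs ! l)) \<in> K"
    proof
      fix x assume "x \<in> set (leaves (lnorm (map at (take s vs))))"
      then have "x \<in> set (map at (take s vs))" unfolding lv .
      then obtain i where i: "i < length (take s vs)" "x = at (take s vs ! i)"
        unfolding in_set_conv_nth by auto
      have i2: "i < s" "take s vs ! i = vs ! i" using i by auto
      have "i + 1 < l" using i2 sl by simp
      then have "br (PP [vs!i] [vs!l]) (xF (vs!i)) (xF (vs!l)) \<in> K" using ch_far[of i l] sl by simp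
      then show "br (PP (snd x) [vs ! l]) (fst x) (xF (vs ! l)) \<in> K"
        using i i2 by (simp add: at_def)
    qed
  qed
  then show ?thesis unfolding W_def by (simp add: deg_leaves lv)
qed

lemma S1rev: "i + 1 < l \<Longrightarrow> l < length vs \<Longrightarrow> br (PP [vs!l] [vs!i]) (xF (vs!l)) (xF (vs!i)) \<in> K"
proof -
  assume il: "i + 1 < l" "l < length vs"
  have "PP [vs!i] [vs!l] * PP [vs!l] [vs!i] = 1" and k: "br (PP [vs!i] [vs!l]) (xF (vs!i)) (xF (vs!l)) \<in> K"
    using ch_far[OF il] by auto
  then have "PP [vs!l] [vs!i] * PP [vs!i] [vs!l] = 1" by (simp add: mult.commute)
  then show ?thesis by (subst br_flip) (auto intro: k)
qed

lemma S2: "1 \<le> j \<Longrightarrow> j < length vs \<Longrightarrow>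
   br (PP (take j vs) [vs!j] * q) (br (PP (take j vs) [vs!j]) (W vs j) (xF (vs!j))) (xF (vs!j)) \<in> K"
proof -
  assume j: "1 \<le> j" "j < length vs"
  show ?thesis
  proof (cases "j = 1")
    case True
    have h: "br (PP [vs!0, vs!1] [vs!1]) (br (PP [vs!0] [vs!1]) (xF (vs!0)) (xF (vs!1))) (xF (vs!1)) \<in> K"
      using ch_R2[of 0] j True by simp
    have tk: "take 1 vs = [vs!0]" using j by (cases vs) auto
    have "PP [vs!0, vs!1] [vs!1] = PP [vs!0] [vs!1] * q"
      using PP_Cons_left[of "vs!0" "[vs!1]" "[vs!1]"] ch_q[of 1] j True by simp
    moreover have "W vs 1 = xF (vs!0)" using j by (intro W_1) auto
    ultimately show ?thesis using h True tk by simp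
  next
    case False
    define s where "s = j - 1"
    have s: "1 \<le> s" "Suc s = j" using j False by (auto simp: s_def)
    define D where "D = take s vs"
    define a where "a = vs!s"
    define b where "b = vs!j"
    have tkj: "take j vs = D @ [a]" using s j by (simp add: D_def a_def take_Suc_conv_app_nth[symmetric])
    have Wj: "W vs j = br (PP D [a]) (W vs s) (xF a)" using W_Suc[of s vs] s j by (simp add: D_def a_def)
    have pA: "W vs s \<in> polys n" using s j by (intro ch_Wp) auto
    have pa: "xF a \<in> polys n" and pb: "xF b \<in> polys n" using s j by (auto simp: a_def b_def intro!: ch_xF)
    have h1: "br (PP D [b]) (W vs s) (xF b) \<in> K" using S1[of s j] s j by (simp add: D_def b_def)
    have h2: "br (PP [a, b] [b]) (br (PP [a] [b]) (xF a) (xF b)) (xF b) \<in> K"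
      using ch_R2[of s] s j unfolding a_def b_def by simp
    have qb: "PP [b] [b] = q" using ch_q j by (simp add: b_def)
    have pab: "PP [a, b] [b] = PP [a] [b] * q" using PP_Cons_left[of a "[b]" "[b]"] qb by simp
    define w where "w = br (PP [a] [b]) (xF a) (xF b)"
    have st1: "br (PP D [b] * PP [a] [b]) (br (PP D [a]) (W vs s) (xF a)) (xF b)
        - br (PP D [a] * PP D [b]) (W vs s) w \<in> K"
      unfolding w_def by (rule Jassoc[OF pA pa pb h1])
    have st2: "br (PP D [b] * PP [a] [b] * q) (br (PP D [b] * PP [a] [b]) (br (PP D [a]) (W vs s) (xF a)) (xF b)) (xF b)
        - br (PP D [b] * PP [a] [b] * q) (br (PP D [a] * PP D [b]) (W vs s) w) (xF b) \<in> K"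
      by (rule K_br_cong_left[OF st1 pb])
    have st3: "br (PP D [b] * (PP [a] [b] * q)) (br (PP D [a] * PP D [b]) (W vs s) w) (xF b) \<in> K"
      by (rule J1[OF pA _ pb h1]) (use h2 pab pa pb in \<open>auto simp: w_def\<close>)
    have "br (PP D [b] * PP [a] [b] * q) (br (PP D [b] * PP [a] [b]) (br (PP D [a]) (W vs s) (xF a)) (xF b)) (xF b) \<in> K"
      using K_eq_mem[OF st2] st3 by (simp add: mult.assoc)
    then show ?thesis by (simp add: tkj Wj b_def)
  qed
qed

lemma S3: "1 \<le> j \<Longrightarrow> j + 1 < length vs \<Longrightarrow>
   br (PP (take (j+2) vs) [vs!j]) (W vs (j+2)) (xF (vs!j)) \<in> K"
proof -
  assume j: "1 \<le> j" "j + 1 < length vs"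
  define D where "D = take j vs"
  define b where "b = vs!j"
  define c where "c = vs!(j+1)"
  have pA: "W vs j \<in> polys n" using j by (intro ch_Wp) auto
  have pb: "xF b \<in> polys n" and pc: "xF c \<in> polys n" using j by (auto simp: b_def c_def intro!: ch_xF)
  have bn: "b \<in> {1..n}" using ch_nth j by (simp add: b_def)
  have H1: "br (PP D [b] * q) (br (PP D [b]) (W vs j) (xF b)) (xF b) \<in> K"
    using S2[of j] j by (simp add: D_def b_def)
  have H2: "br (PP D [c]) (W vs j) (xF c) \<in> K"
    using S1[of j "j+1"] j by (simp add: D_def c_def)
  have H3': "br (PP [b] [b, c]) (xF b) (br (PP [b] [c]) (xF b) (xF c)) \<in> K"
    using ch_R1[of j] j unfolding b_def c_def by simp
  have "PP [b] [b, c] = q * PP [b] [c]"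
    using PP_append_right[of "[b]" "[b]" "[c]"] bn ch_q[of j] j by (simp add: b_def)
  with H3' have H3: "br (q * PP [b] [c]) (xF b) (br (PP [b] [c]) (xF b) (xF c)) \<in> K" by simp
  have pr: "PP [b] [c] * PP [c] [b] * q = 1" using ch_adj[of j] j unfolding b_def c_def by simp
  have k: "br (PP D [b] * q * PP [c] [b]) (br (PP D [c] * PP [b] [c]) (br (PP D [b]) (W vs j) (xF b)) (xF c)) (xF b) \<in> K"
    by (rule key[OF pA pb pc H1 H2 H3 pr])
  have W1: "W vs (j+1) = br (PP D [b]) (W vs j) (xF b)" using W_Suc[of j vs] j by (simp add: D_def b_def)
  have W2: "W vs (j+2) = br (PP (D @ [b]) [c]) (W vs (j+1)) (xF c)"
    using W_Suc[of "j+1" vs] j by (simp add: D_def b_def c_def take_Suc_conv_app_nth)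
  have tk: "take (j+2) vs = D @ [b, c]" using j
    by (simp add: D_def b_def c_def take_Suc_conv_app_nth numeral_2_eq_2)
  have qb: "PP [b] [b] = q" using ch_q j by (simp add: b_def)
  have "PP (D @ [b, c]) [b] = PP D [b] * q * PP [c] [b]"
    using qb PP_Cons_left[of b "[c]" "[b]"] by (simp add: ac_simps)
  then have e1: "PP (take (j+2) vs) [b] = PP D [b] * q * PP [c] [b]" using tk by simp
  have e2: "W vs (j+2) = br (PP D [c] * PP [b] [c]) (br (PP D [b]) (W vs j) (xF b)) (xF c)"
    using W2 W1 by simp
  have "br (PP (take (j+2) vs) [b]) (W vs (j+2)) (xF b) \<in> K" unfolding e1 e2 by (rule k)
  then show ?thesis by (simp add: b_def)
qed

lemma S4:
  assumes js: "j + 2 \<le> s" and j1: "1 \<le> j"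
  shows "s \<le> length vs \<Longrightarrow> br (PP (take s vs) [vs!j]) (W vs s) (xF (vs!j)) \<in> K"
  using js
proof (induction s rule: dec_induct)
  case base
  then show ?case using S3[of j] j1 by simp
next
  case (step s)
  then have s: "s < length vs" "j + 2 \<le> s" by auto
  have IH: "br (PP (take s vs) [vs!j]) (W vs s) (xF (vs!j)) \<in> K" using step by auto
  have r: "br (PP [vs!s] [vs!j]) (xF (vs!s)) (xF (vs!j)) \<in> K" using S1rev[of j s] s by simp
  have pW: "W vs s \<in> polys n" using s j1 by (intro ch_Wp) auto
  have "br (PP (take s vs) [vs!j] * PP [vs!s] [vs!j]) (br (PP (take s vs) [vs!s]) (W vs s) (xF (vs!s))) (xF (vs!j)) \<in> K"
    by (rule J1[OF pW ch_xF ch_xF IH r]) (use s in auto)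
  moreover have "1 \<le> s" using s j1 by simp
  ultimately show ?case using W_Suc[of s vs] s by (simp add: take_Suc_conv_app_nth)
qed

lemma chain_main: "0 < j \<Longrightarrow> j + 1 < length vs \<Longrightarrow>
   br (PP vs [vs!j]) (evF (lnorm (map at vs))) (xF (vs!j)) \<in> K"
  using S4[of j "length vs"] by (simp add: W_def)

end


lemma PPs: "PP [a] [b] = chi a (gs b)" by (rule PP_single)

lemma ew_len: "k < n \<Longrightarrow> length (ew k n) = n - k"
  by (simp add: ew_def)

lemma ew_nth1: "i < n - 1 - k \<Longrightarrow> ew k n ! i = k + i"
  by (simp add: ew_def nth_append)

lemma ew_nth2: "k < n \<Longrightarrow> ew k n ! (n - 1 - k) = n"
  by (simp add: ew_def nth_append)

lemma par_adj: "1 < i \<Longrightarrow> i < n \<Longrightarrow> chi i (gs (i-1)) * chi (i-1) (gs i) = inverse q"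
  using par by (simp add: so_params_def)
lemma par_n2: "chi (n-2) (gs n) * chi n (gs (n-2)) = inverse q"
  using par by (simp add: so_params_def)
lemma par_far: "1 \<le> i \<Longrightarrow> i < j \<Longrightarrow> j \<le> n \<Longrightarrow> i + 1 < j \<Longrightarrow> (i, j) \<noteq> (n-2, n) \<Longrightarrow>
   chi i (gs j) * chi j (gs i) = 1"
  using par unfolding so_params_def by blast
lemma par_q: "i \<in> {1..n} \<Longrightarrow> chi i (gs i) = q"
  using par by (simp add: so_params_def)

lemma chain_ew: assumes k: "1 \<le> k" "k < n" shows "chainok (ew k n)"
proof -
  let ?v = "ew k n"
  have len: "length ?v = n - k" by (rule ew_len[OF k(2)])
  have vi: "?v ! i = (if i < n - 1 - k then k + i else n)" if "i < length ?v" for i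
  proof (cases "i < n - 1 - k")
    case True then show ?thesis using ew_nth1[of i] by simp
  next
    case False
    then have "i = n - 1 - k" using that len by simp
    then show ?thesis using ew_nth2[OF k(2)] False by simp
  qed
  have st: "set ?v \<subseteq> {1..n}" using k by (auto simp: ew_def)
  have c2: "\<forall>a\<in>set ?v. PP [a] [a] = q" using st par_q by (auto simp: PPs)
  have c3: "PP [?v!i] [?v!Suc i] * PP [?v!Suc i] [?v!i] * q = 1 \<and>
      br (PP [?v!i] [?v!i, ?v!Suc i]) (xF (?v!i)) (br (PP [?v!i] [?v!Suc i]) (xF (?v!i)) (xF (?v!Suc i))) \<in> K \<and>
      br (PP [?v!i, ?v!Suc i] [?v!Suc i]) (br (PP [?v!i] [?v!Suc i]) (xF (?v!i)) (xF (?v!Suc i))) (xF (?v!Suc i)) \<in> K"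
    if i: "Suc i < length ?v" for i
  proof (cases "Suc i < n - 1 - k")
    case True
    have e: "?v ! i = k + i" "?v ! Suc i = k + i + 1" using vi[of i] vi[of "Suc i"] i True by auto
    have "chi (k+i+1) (gs (k+i+1-1)) * chi (k+i+1-1) (gs (k+i+1)) = inverse q"
      using True k by (intro par_adj) auto
    then have "chi (k+i) (gs (k+i+1)) * chi (k+i+1) (gs (k+i)) * q = 1"
      using q_nz by (simp add: field_simps)
    moreover have "br (PP [k+i] [k+i, k+i+1]) (xF (k+i)) (br (PP [k+i] [k+i+1]) (xF (k+i)) (xF (k+i+1))) \<in> K"
      using True k by (intro relS1) auto
    moreover have "br (PP [k+i, k+i+1] [k+i+1]) (br (PP [k+i] [k+i+1]) (xF (k+i)) (xF (k+i+1))) (xF (k+i+1)) \<in> K"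
      using True k by (intro relS2) auto
    ultimately show ?thesis unfolding e by (simp add: PPs)
  next
    case False
    then have si: "Suc i = n - 1 - k" using i len by simp
    have e: "?v ! i = n - 2" "?v ! Suc i = n" using vi[of i] vi[of "Suc i"] i si k by auto
    have "chi (n-2) (gs n) * chi n (gs (n-2)) * q = 1" using par_n2 q_nz by (simp add: field_simps)
    then show ?thesis unfolding e using relN1 relN2 by (simp add: PPs)
  qed
  have c4: "PP [?v!i] [?v!j] * PP [?v!j] [?v!i] = 1 \<and> br (PP [?v!i] [?v!j]) (xF (?v!i)) (xF (?v!j)) \<in> K"
    if ij: "i + 1 < j" "j < length ?v" for i j
  proof -
    have ei: "?v ! i = k + i" using vi[of i] ij len by auto
    show ?thesis
    proof (cases "j < n - 1 - k")
      case True
      have ej: "?v ! j = k + j" using vi[of j] ij True by auto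
      have "chi (k+i) (gs (k+j)) * chi (k+j) (gs (k+i)) = 1"
        using True ij k by (intro par_far) auto
      moreover have "br (PP [k+i] [k+j]) (xF (k+i)) (xF (k+j)) \<in> K"
        using True ij k by (intro relC) auto
      ultimately show ?thesis unfolding ei ej by (simp add: PPs)
    next
      case False
      have ej: "?v ! j = n" using vi[of j] ij False by auto
      have "chi (k+i) (gs n) * chi n (gs (k+i)) = 1"
        using False ij k len by (intro par_far) auto
      moreover have "br (PP [k+i] [n]) (xF (k+i)) (xF n) \<in> K"
        using False ij k len by (intro relCn) auto
      ultimately show ?thesis unfolding ei ej by (simp add: PPs)
    qed
  qed
  show ?thesis unfolding chainok_def using st c2 c3 c4 by blast
qed

lemma map_lnorm: "xs \<noteq> [] \<Longrightarrow> map_btree f (lnorm xs) = lnorm (map f xs)"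
proof (induction xs rule: rev_induct)
  case Nil then show ?case by simp
next
  case (snoc x xs)
  then show ?case by (cases "xs = []") (auto simp: lnorm_snoc)
qed


lemma represent:
  assumes lt: "leaves t = map (\<lambda>(e,d). (E e, d)) L'" and g: "good L'"
  shows "ev chi gs t = E (evF (map_btree (\<lambda>(e,d). (PE e, d)) t))
         \<and> leaves (map_btree (\<lambda>(e,d). (PE e, d)) t) = L'"
proof -
  let ?t' = "map_btree (\<lambda>(e,d). (PE e, d)) t"
  have l': "leaves ?t' = L'" unfolding leaves_map lt by (induction L') (auto simp: case_prod_beta)
  have "map_btree (\<lambda>(e,d). (E e, d)) ?t' = map_btree ((\<lambda>(e,d). (E e, d)) \<circ> (\<lambda>(e,d). (PE e, d))) t"
    by (simp add: btree.map_comp)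
  also have "\<dots> = map_btree id t"
  proof (rule btree.map_cong)
    fix z assume "z \<in> set_btree t"
    then have "z \<in> set (map (\<lambda>(e,d). (E e, d)) L')" by (simp add: set_btree_leaves lt)
    then show "((\<lambda>(e,d). (E e, d)) \<circ> (\<lambda>(e,d). (PE e, d))) z = id z" by auto
  qed simp
  finally have tt: "map_btree (\<lambda>(e,d). (E e, d)) ?t' = t" by (simp add: btree.map_id)
  have "ev chi gs t = E (evF ?t')"
    using conn[of ?t'] g l' tt by simp
  then show ?thesis using l' by simp
qed

lemma final:
  assumes k: "1 \<le> k" "k < n" and m: "n < m" "m < 2 * n - k"
  and t1: "leaves t1 = (ebr chi gs k n, ew k n) # map (\<lambda>i. xa (2 * n - i)) [n+1..<m+1]"
  and t2: "leaves t2 = (ebr chi gs k n, ew k n) # map (\<lambda>i. xa (2 * n - i)) [n+1..<m+1]"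
  shows "eqU chi gs n (ev chi gs t1) (ev chi gs t2)"
proof -
  define vs where "vs = ew k n"
  have ch: "chainok vs" unfolding vs_def by (rule chain_ew[OF k])
  have vsne: "vs \<noteq> []" by (simp add: vs_def ew_def)
  have vsset: "set vs \<subseteq> {1..n}" using k by (auto simp: vs_def ew_def)
  have lenv: "length vs = n - k" unfolding vs_def by (rule ew_len[OF k(2)])
  define Y where "Y = evF (lnorm (map at vs))"
  have gY: "good (leaves (lnorm (map at vs)))" using vsne vsset by (simp add: leaves_lnorm good_at)
  have pY: "Y \<in> polys n" unfolding Y_def by (rule evF_polys[OF gY])
  have xa_at: "xa i = (\<lambda>(e,d). (E e, d)) (at i)" for i :: nat
    by (simp add: xa_def at_def E_mon1)
  have xa_fun: "xa = (\<lambda>i. (\<lambda>(e,d). (E e, d)) (at i))"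
    by (rule ext) (rule xa_at)
  have ebrY: "ebr chi gs k n = E Y"
  proof -
    have "ebr chi gs k n = ev chi gs (lnorm (map (\<lambda>(e,d). (E e, d)) (map at vs)))"
      by (simp add: ebr_def vs_def[symmetric] map_map comp_def xa_fun)
    also have "\<dots> = ev chi gs (map_btree (\<lambda>(e,d). (E e, d)) (lnorm (map at vs)))"
      using vsne by (simp add: map_lnorm)
    also have "\<dots> = E Y" unfolding Y_def by (rule conn[OF gY])
    finally show ?thesis .
  qed
  define L where "L = (Y, vs) # map (\<lambda>i. at (2 * n - i)) [n+1..<m+1]"
  have LL: "(ebr chi gs k n, ew k n) # map (\<lambda>i. xa (2 * n - i)) [n+1..<m+1] = map (\<lambda>(e,d). (E e, d)) L"
    by (simp add: L_def ebrY vs_def xa_at)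
  have gL: "good L"
  proof -
    have "good [(Y, vs)]" using pY vsset by (simp add: good_def)
    moreover have "set (map (\<lambda>i. 2 * n - i) [n+1..<m+1]) \<subseteq> {1..n}" using m k by auto
    then have "good (map at (map (\<lambda>i. 2 * n - i) [n+1..<m+1]))" by (rule good_at)
    ultimately show ?thesis unfolding L_def using good_append[of "[(Y, vs)]"] by (simp add: map_map comp_def)
  qed
  have lenL: "length L = Suc (m - n)" using m by (simp add: L_def)
  have L0: "L ! 0 = (Y, vs)" by (simp add: L_def)
  have LS: "L ! Suc j = at (n - 1 - j)" if "j < m - n" for j
  proof -
    have "L ! Suc j = at (2 * n - [n+1..<m+1] ! j)" using that m by (simp add: L_def del: upt_Suc)
    moreover have "[n+1..<m+1] ! j = n + 1 + j" using that by (simp del: upt_Suc)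
    moreover have "2 * n - (n + 1 + j) = n - 1 - j" by arith
    ultimately show ?thesis by simp
  qed
  have cc: "CC L"
    unfolding CC_def
  proof (intro allI impI)
    fix i j assume ij: "i + 1 < j \<and> j < length L"
    then obtain j' where j': "j = Suc j'" "j' < m - n" using lenL by (cases j) auto
    let ?b = "n - 1 - j'"
    have bk: "k < ?b" using j' m by linarith
    show "br (PP (snd (L!i)) (snd (L!j))) (fst (L!i)) (fst (L!j)) \<in> K"
    proof (cases i)
      case 0
      then have j1: "1 \<le> j'" using ij j' by simp
      define p where "p = ?b - k"
      have pv: "vs ! p = ?b" using j1 bk unfolding vs_def p_def by (subst ew_nth1) auto
      have "br (PP vs [vs!p]) (evF (lnorm (map at vs))) (xF (vs!p)) \<in> K"
        using chain_main[OF ch, of p] bk j1 lenv by (simp add: p_def)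
      then show ?thesis using 0 L0 LS[OF j'(2)] j' pv by (simp add: Y_def at_def)
    next
      case (Suc i')
      let ?a = "n - 1 - i'"
      have ia: "i' + 1 < j'" using ij j' Suc by simp
      have Li: "L ! i = at ?a" using Suc LS[of i'] ia j' by simp
      have ab: "1 \<le> ?b" "?b + 1 < ?a" "?a \<le> n - 1" using ia bk k j' m by auto
      have r: "br (PP [?b] [?a]) (xF ?b) (xF ?a) \<in> K" using ab by (intro relC) auto
      have "chi ?b (gs ?a) * chi ?a (gs ?b) = 1" using ab k by (intro par_far) auto
      then have pp1: "PP [?a] [?b] * PP [?b] [?a] = 1" by (simp add: PPs mult.commute)
      have "br (PP [?a] [?b]) (xF ?a) (xF ?b) \<in> K"
        by (subst br_flip[OF pp1]) (rule K_scm[OF r])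
      then show ?thesis using Li LS[OF j'(2)] j' by (simp add: at_def)
    qed
  qed
  obtain r1 where r1: "ev chi gs t1 = E (evF (map_btree (\<lambda>(e,d). (PE e, d)) t1))"
      "leaves (map_btree (\<lambda>(e,d). (PE e, d)) t1) = L"
    using represent[OF t1[unfolded LL] gL] by blast
  obtain r2 where r2: "ev chi gs t2 = E (evF (map_btree (\<lambda>(e,d). (PE e, d)) t2))"
      "leaves (map_btree (\<lambda>(e,d). (PE e, d)) t2) = L"
    using represent[OF t2[unfolded LL] gL] by blast
  have i1: "evF (map_btree (\<lambda>(e,d). (PE e, d)) t1) - evF (lnorm L) \<in> K"
    using indep[of "map_btree (\<lambda>(e,d). (PE e, d)) t1"] r1(2) gL cc by simp
  have i2: "evF (map_btree (\<lambda>(e,d). (PE e, d)) t2) - evF (lnorm L) \<in> K"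
    using indep[of "map_btree (\<lambda>(e,d). (PE e, d)) t2"] r2(2) gL cc by simp
  have "evF (map_btree (\<lambda>(e,d). (PE e, d)) t1) - evF (map_btree (\<lambda>(e,d). (PE e, d)) t2) \<in> K"
    by (rule K_trans[OF i1 K_sym[OF i2]])
  then show ?thesis unfolding eqU_def r1(1) r2(1) E_diff[symmetric] by (simp add: K_def)
qed

end

theorem lemma6p4:
  fixes chi :: "nat \<Rightarrow> 'g::ab_group_add \<Rightarrow> 'k::field"
    and gs :: "nat \<Rightarrow> 'g" and q :: 'k and n k m :: nat
  assumes "n \<ge> 3" and "q \<noteq> -1" and "so_params chi gs n q"
    and "1 \<le> k" and "k < n" and "n < m" and "m < 2 * n - k"
  shows "\<forall>t1 t2. leaves t1 = (ebr chi gs k n, ew k n) # map (\<lambda>i. xa (2 * n - i)) [n+1..<m+1]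
             \<and> leaves t2 = (ebr chi gs k n, ew k n) # map (\<lambda>i. xa (2 * n - i)) [n+1..<m+1]
             \<longrightarrow> eqU chi gs n (ev chi gs t1) (ev chi gs t2)"
proof -
  interpret soctx chi gs n q using assms(1-3) by unfold_locales
  show ?thesis using final[OF assms(4-7)] by blast
qed


end
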